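(* Let $\mu$ be in the relative interior of $\Delta$. Suppose the updating rule respects the Blackwell order for $\mu$ and $\varphi=\varphi^{\mu}$ has a contractive error at some $x_1\in\Delta$ but produces no expansive error. Writing $\hat x_1=\varphi(x_1)\ne x_1$, there exists $x_1^*\in\ell(\mu,\hat x_1)$ such that $\varphi(x')=x_1^*$ for all $x'\in\ell^{\circ}(x_1^*,x_1)$.
   Context: Let $\Theta$ be a finite set of states, $|\Theta|=n\ge2$, and $\Delta=\Delta(\Theta)$ the simplex of beliefs. An experiment $\pi:\Theta\to\Delta(S)$ ($S$ finite) with prior $\mu$ induces the Bayesian distribution over posteriors $\rho_B$, a finitely supported distribution on $\Delta$ with mean $\mu$ (every such distribution arises from some experiment). Blackwell order: $\pi\succeq\pi'$ iff $\rho_B'$ is a mean-preserving contraction of $\rho_B$. An updating rule is given, for each prior $\mu$, by a distortion function $\varphi^{\mu}:\Delta\to\Delta$: when the Bayesian posterior is $x$, the decision maker holds belief $\varphi^{\mu}(x)$. For a compact action set $A$, continuous $u:A\times\Theta\to\mathbb{R}$, and consistent choice $a^*:\Delta\to A$ (i.e. $a^*(y)\in\arg\max_{a}\mathbb{E}_y u(a,\theta)$ for all $y$), let $W(x)=\mathbb{E}_x u(a^*(\varphi^{\mu}(x)),\theta)$. The rule respects the Blackwell order for $\mu$ if for all such $A,u,a^*$ and all $\pi\succeq\pi'$, $\mathbb{E}_{\rho_B}W\ge\mathbb{E}_{\rho_B'}W$. For $x,y\in\Delta$, $\ell(x,y)$ is the closed segment between them and $\ell^{\circ}(x,y)=\ell(x,y)\setminus\{x,y\}$.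 $\varphi$ has an expansive error at $x$ if $\varphi(x)\notin\ell(x,\mu)$, and a contractive error at $x$ if $\varphi(x)\in\ell(x,\mu)$ and $\varphi(x)\ne x$. *)

theory Defs
  imports "HOL-Analysis.Analysis" "HOL-Probability.Probability_Mass_Function"
begin

text \<open>States: a finite type 'n. Beliefs: vectors in real^'n lying in the belief_simplex.\<close>

definition belief_simplex :: "(real^'n) set" where
  "belief_simplex = {x. (\<forall>i. 0 \<le> x $ i) \<and> (\<Sum>i\<in>UNIV. x $ i) = 1}"

definition bexp :: "real^'n \<Rightarrow> ('n \<Rightarrow> real) \<Rightarrow> real" where
  "bexp y f = (\<Sum>i\<in>UNIV. y $ i * f i)"

text \<open>Finitely supported distribution over posteriors (in the belief_simplex) with mean mu;
  exactly the Bayesian distributions over posteriors induced by experiments with prior mu.\<close>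
definition bayes_plausible :: "real^'n \<Rightarrow> (real^'n) pmf \<Rightarrow> bool" where
  "bayes_plausible mu \<rho> \<longleftrightarrow> finite (set_pmf \<rho>) \<and> set_pmf \<rho> \<subseteq> belief_simplex \<and>
     (\<Sum>x\<in>set_pmf \<rho>. pmf \<rho> x *\<^sub>R x) = mu"

definition mpc :: "(real^'n) pmf \<Rightarrow> (real^'n) pmf \<Rightarrow> bool" where
  "mpc \<rho>' \<rho> \<longleftrightarrow> (\<exists>K. \<rho> = bind_pmf \<rho>' K \<and>
     (\<forall>x'\<in>set_pmf \<rho>'. finite (set_pmf (K x')) \<and>
        (\<Sum>y\<in>set_pmf (K x'). pmf (K x') y *\<^sub>R y) = x'))"

definition pexp :: "(real^'n) pmf \<Rightarrow> (real^'n \<Rightarrow> real) \<Rightarrow> real" where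
  "pexp \<rho> W = (\<Sum>x\<in>set_pmf \<rho>. pmf \<rho> x * W x)"

text \<open>Decision problem: compact action set A (actions represented in the type real^'n,
  which is w.l.o.g.), payoff u continuous (Theta is finite and discrete),
  and a consistent choice astar.\<close>
definition decision_problem ::
  "(real^'n) set \<Rightarrow> (real^'n \<Rightarrow> 'n \<Rightarrow> real) \<Rightarrow> (real^'n \<Rightarrow> real^'n) \<Rightarrow> bool" where
  "decision_problem A u astar \<longleftrightarrow> compact A \<and> (\<forall>i. continuous_on A (\<lambda>a. u a i)) \<and>
     (\<forall>y\<in>belief_simplex. astar y \<in> A \<and> (\<forall>b\<in>A. bexp y (u b) \<le> bexp y (u (astar y))))"

definition respects_blackwell :: "real^'n \<Rightarrow> (real^'n \<Rightarrow> real^'n) \<Rightarrow> bool" where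
  "respects_blackwell mu \<phi> \<longleftrightarrow>
     (\<forall>A u astar. decision_problem A u astar \<longrightarrow>
       (\<forall>\<rho> \<rho>'. bayes_plausible mu \<rho> \<and> bayes_plausible mu \<rho>' \<and> mpc \<rho>' \<rho> \<longrightarrow>
          pexp \<rho>' (\<lambda>x. bexp x (u (astar (\<phi> x)))) \<le> pexp \<rho> (\<lambda>x. bexp x (u (astar (\<phi> x))))))"

definition expansive_error :: "real^'n \<Rightarrow> (real^'n \<Rightarrow> real^'n) \<Rightarrow> real^'n \<Rightarrow> bool" where
  "expansive_error mu \<phi> x \<longleftrightarrow> \<phi> x \<notin> closed_segment x mu"

definition contractive_error :: "real^'n \<Rightarrow> (real^'n \<Rightarrow> real^'n) \<Rightarrow> real^'n \<Rightarrow> bool" where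
  "contractive_error mu \<phi> x \<longleftrightarrow> \<phi> x \<in> closed_segment x mu \<and> \<phi> x \<noteq> x"

end

theory Submission
  imports Defs
begin


lemma sum_setpmf_integral:
  fixes f :: "'a \<Rightarrow> 'b::{banach, second_countable_topology}"
  assumes "finite (set_pmf M)"
  shows "(\<Sum>x\<in>set_pmf M. pmf M x *\<^sub>R f x) = measure_pmf.expectation M f"
  by (rule integral_measure_pmf[OF assms, symmetric]) auto

lemma pexp_integral:
  assumes "finite (set_pmf M)"
  shows "pexp M W = measure_pmf.expectation M W"
  using sum_setpmf_integral[OF assms, of W] by (simp add: pexp_def)

lemma integral_two:
  fixes f :: "'a \<Rightarrow> 'b::{banach, second_countable_topology}"
  assumes "0 \<le> p" "p \<le> 1"
  shows "measure_pmf.expectation (map_pmf (\<lambda>b. if b then a else a') (bernoulli_pmf p)) f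
    = p *\<^sub>R f a + (1 - p) *\<^sub>R f a'"
  using assms by (simp add: integral_measure_pmf[of UNIV] UNIV_bool)

lemma integral_return_pmf':
  fixes f :: "'a \<Rightarrow> 'b::{banach, second_countable_topology}"
  shows "measure_pmf.expectation (return_pmf z) f = f z"
  by (subst integral_measure_pmf[of "{z}"]) auto

lemma integral_bind_fin:
  fixes f :: "'a \<Rightarrow> 'b::{banach, second_countable_topology}"
  assumes fM: "finite (set_pmf M)" and fK: "\<And>y. y \<in> set_pmf M \<Longrightarrow> finite (set_pmf (K y))"
  shows "measure_pmf.expectation (bind_pmf M K) f
     = measure_pmf.expectation M (\<lambda>y. measure_pmf.expectation (K y) f)"
proof -
  define B where "B = (\<Union>y\<in>set_pmf M. set_pmf (K y))"
  have fB: "finite B" using fM fK by (auto simp: B_def)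
  have pb: "pmf (bind_pmf M K) z = (\<Sum>y\<in>set_pmf M. pmf M y * pmf (K y) z)" for z
    unfolding pmf_bind by (subst integral_measure_pmf[OF fM]) (auto simp: mult.commute)
  have "measure_pmf.expectation (bind_pmf M K) f = (\<Sum>z\<in>B. pmf (bind_pmf M K) z *\<^sub>R f z)"
    by (rule integral_measure_pmf[OF fB]) (auto simp: B_def)
  also have "\<dots> = (\<Sum>z\<in>B. \<Sum>y\<in>set_pmf M. (pmf M y * pmf (K y) z) *\<^sub>R f z)"
    by (simp add: pb scaleR_sum_left)
  also have "\<dots> = (\<Sum>y\<in>set_pmf M. \<Sum>z\<in>B. (pmf M y * pmf (K y) z) *\<^sub>R f z)"
    by (rule sum.swap)
  also have "\<dots> = (\<Sum>y\<in>set_pmf M. pmf M y *\<^sub>R measure_pmf.expectation (K y) f)"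
  proof (rule sum.cong[OF refl])
    fix y assume y: "y \<in> set_pmf M"
    have "measure_pmf.expectation (K y) f = (\<Sum>z\<in>B. pmf (K y) z *\<^sub>R f z)"
      by (rule integral_measure_pmf[OF fB]) (use y in \<open>auto simp: B_def\<close>)
    then show "(\<Sum>z\<in>B. (pmf M y * pmf (K y) z) *\<^sub>R f z) = pmf M y *\<^sub>R measure_pmf.expectation (K y) f"
      by (simp add: scaleR_sum_right)
  qed
  also have "\<dots> = measure_pmf.expectation M (\<lambda>y. measure_pmf.expectation (K y) f)"
    by (rule integral_measure_pmf[OF fM, symmetric]) auto
  finally show ?thesis .
qed

lemma line_comb:
  fixes mu dd :: "'a::real_vector" and aa bb ss tt :: real
  assumes "aa + bb = 1"
  shows "aa *\<^sub>R (mu + ss *\<^sub>R dd) + bb *\<^sub>R (mu + tt *\<^sub>R dd) = mu + (aa * ss + bb * tt) *\<^sub>R dd"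
proof -
  have "aa *\<^sub>R (mu + ss *\<^sub>R dd) + bb *\<^sub>R (mu + tt *\<^sub>R dd) = (aa+bb) *\<^sub>R mu + (aa * ss + bb * tt) *\<^sub>R dd"
    by (simp add: algebra_simps)
  then show ?thesis using assms by simp
qed

lemma blackwell_line:
  fixes mu x1 :: "real^'n" and \<phi> :: "real^'n \<Rightarrow> real^'n"
  assumes rb: "respects_blackwell mu \<phi>"
    and dp: "decision_problem A u astar"
    and Sin: "\<And>t. -e \<le> t \<Longrightarrow> t \<le> 1 \<Longrightarrow> mu + t *\<^sub>R (x1 - mu) \<in> belief_simplex"
    and e: "e > 0" and neq: "x1 \<noteq> mu"
    and c: "0 \<le> c1" "c1 < c" "c < c2" "c2 \<le> 1"
  shows "(c2 - c1) * bexp (mu + c *\<^sub>R (x1 - mu)) (u (astar (\<phi> (mu + c *\<^sub>R (x1 - mu)))))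
    \<le> (c2 - c) * bexp (mu + c1 *\<^sub>R (x1 - mu)) (u (astar (\<phi> (mu + c1 *\<^sub>R (x1 - mu)))))
     + (c - c1) * bexp (mu + c2 *\<^sub>R (x1 - mu)) (u (astar (\<phi> (mu + c2 *\<^sub>R (x1 - mu)))))"
proof -
  define W where "W x = bexp x (u (astar (\<phi> x)))" for x
  define d where "d = x1 - mu"
  define L where "L t = mu + t *\<^sub>R d" for t
  define p where "p = e / (c + e)"
  define lam where "lam = (c2 - c) / (c2 - c1)"
  define B :: "real \<Rightarrow> real^'n \<Rightarrow> real^'n \<Rightarrow> (real^'n) pmf"
    where "B q a a' = map_pmf (\<lambda>b. if b then a else a') (bernoulli_pmf q)" for q a a'
  define X where "X = L c"
  define Y where "Y = L (-e)"
  define \<rho>' where "\<rho>' = B p X Y"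
  define K where "K z = (if z = X then B lam (L c1) (L c2) else return_pmf z)" for z
  define \<rho> where "\<rho> = bind_pmf \<rho>' K"
  have p01: "0 < p" "p < 1" using c e by (auto simp: p_def field_simps)
  have lam01: "0 < lam" "lam < 1" using c by (auto simp: lam_def field_simps)
  have d0: "d \<noteq> 0" using neq by (simp add: d_def)
  have XY: "X \<noteq> Y"
  proof
    assume "X = Y"
    then have "(c + e) *\<^sub>R d = 0" by (simp add: X_def Y_def L_def algebra_simps)
    then show False using d0 c e by simp
  qed
  have setB: "0 < q \<Longrightarrow> q < 1 \<Longrightarrow> set_pmf (B q a a') = {a, a'}" for q a a'
    by (auto simp: B_def)
  have EB: "0 \<le> q \<Longrightarrow> q \<le> 1 \<Longrightarrow> measure_pmf.expectation (B q a a') f = q *\<^sub>R f a + (1 - q) *\<^sub>R f a'"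
    for q a a' and f :: "real^'n \<Rightarrow> 'b::{banach, second_countable_topology}"
    unfolding B_def by (rule integral_two)
  have set\<rho>': "set_pmf \<rho>' = {X, Y}" using p01 by (simp add: \<rho>'_def setB)
  have KX: "K X = B lam (L c1) (L c2)" and KY: "K Y = return_pmf Y" using XY by (auto simp: K_def)
  have setK: "finite (set_pmf (K z))" for z
    using lam01 by (auto simp: K_def setB)
  have set\<rho>: "set_pmf \<rho> \<subseteq> {L c1, L c2, Y}"
    using lam01 XY by (auto simp: \<rho>_def set\<rho>' KX KY setB)
  have fin\<rho>: "finite (set_pmf \<rho>)" by (rule finite_subset[OF set\<rho>]) auto
  have fin\<rho>': "finite (set_pmf \<rho>')" by (simp add: set\<rho>')
  have E\<rho>': "measure_pmf.expectation \<rho>' f = p *\<^sub>R f X + (1 - p) *\<^sub>R f Y"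
    for f :: "real^'n \<Rightarrow> 'b::{banach, second_countable_topology}"
    unfolding \<rho>'_def using p01 by (intro EB) auto
  have E\<rho>: "measure_pmf.expectation \<rho> f = p *\<^sub>R (lam *\<^sub>R f (L c1) + (1 - lam) *\<^sub>R f (L c2)) + (1 - p) *\<^sub>R f Y"
    for f :: "real^'n \<Rightarrow> 'b::{banach, second_countable_topology}"
  proof -
    have "measure_pmf.expectation \<rho> f = measure_pmf.expectation \<rho>' (\<lambda>y. measure_pmf.expectation (K y) f)"
      unfolding \<rho>_def by (rule integral_bind_fin[OF fin\<rho>' setK])
    also have "\<dots> = p *\<^sub>R measure_pmf.expectation (K X) f + (1 - p) *\<^sub>R measure_pmf.expectation (K Y) f"
      by (rule E\<rho>')
    also have "\<dots> = p *\<^sub>R (lam *\<^sub>R f (L c1) + (1 - lam) *\<^sub>R f (L c2)) + (1 - p) *\<^sub>R f Y"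
      using lam01 by (simp add: KX KY EB integral_return_pmf')
    finally show ?thesis .
  qed
  have pc: "p * c + (1 - p) * (-e) = 0" using c e by (simp add: p_def field_simps)
  have lc: "lam * c1 + (1 - lam) * c2 = c"
  proof -
    have "lam * (c2 - c1) = c2 - c" using c by (simp add: lam_def)
    then show ?thesis by (simp add: algebra_simps)
  qed
  have meanX: "p *\<^sub>R X + (1 - p) *\<^sub>R Y = mu"
    unfolding X_def Y_def L_def using line_comb[of p "1 - p" mu c d "-e"] pc by simp
  have meanK: "lam *\<^sub>R L c1 + (1 - lam) *\<^sub>R L c2 = X"
    unfolding X_def L_def using line_comb[of lam "1 - lam" mu c1 d c2] lc by simp
  have inS: "L t \<in> belief_simplex" if "-e \<le> t" "t \<le> 1" for t
    using Sin[OF that] by (simp add: L_def d_def)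
  have m': "(\<Sum>x\<in>set_pmf \<rho>'. pmf \<rho>' x *\<^sub>R x) = mu"
    using sum_setpmf_integral[OF fin\<rho>', of "\<lambda>x. x"] E\<rho>'[of "\<lambda>x. x"] meanX by simp
  have m: "(\<Sum>x\<in>set_pmf \<rho>. pmf \<rho> x *\<^sub>R x) = mu"
    using sum_setpmf_integral[OF fin\<rho>, of "\<lambda>x. x"] E\<rho>[of "\<lambda>x. x"] meanX meanK by simp
  have bp': "bayes_plausible mu \<rho>'"
    unfolding bayes_plausible_def
    using fin\<rho>' inS c e m'
    by (auto simp: set\<rho>' X_def Y_def)
  have bp: "bayes_plausible mu \<rho>"
    unfolding bayes_plausible_def
    using fin\<rho> inS c e m set\<rho> by (auto simp: Y_def)
  have mp: "mpc \<rho>' \<rho>"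
    unfolding mpc_def
  proof (intro exI conjI ballI)
    show "\<rho> = bind_pmf \<rho>' K" by (simp add: \<rho>_def)
    fix x' assume "x' \<in> set_pmf \<rho>'"
    then have "x' = X \<or> x' = Y" by (simp add: set\<rho>')
    show "finite (set_pmf (K x'))" by (rule setK)
    show "(\<Sum>y\<in>set_pmf (K x'). pmf (K x') y *\<^sub>R y) = x'"
    proof -
      have "(\<Sum>y\<in>set_pmf (K x'). pmf (K x') y *\<^sub>R y) = measure_pmf.expectation (K x') (\<lambda>y. y)"
        by (rule sum_setpmf_integral[OF setK])
      also have "\<dots> = x'"
      proof (cases "x' = X")
        case True
        then show ?thesis using lam01 meanK by (simp add: KX EB)
      next
        case False
        then have "x' = Y" using \<open>x' = X \<or> x' = Y\<close> by simp
        then show ?thesis by (simp add: KY integral_return_pmf')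
      qed
      finally show ?thesis .
    qed
  qed
  have "pexp \<rho>' W \<le> pexp \<rho> W"
    using rb dp bp bp' mp unfolding respects_blackwell_def W_def by blast
  then have "p * W X + (1 - p) * W Y \<le> p * (lam * W (L c1) + (1 - lam) * W (L c2)) + (1 - p) * W Y"
    by (simp add: pexp_integral[OF fin\<rho>] pexp_integral[OF fin\<rho>'] E\<rho> E\<rho>')
  then have "W X \<le> lam * W (L c1) + (1 - lam) * W (L c2)"
    using p01 by simp
  then have "(c2 - c1) * W X \<le> (c2 - c1) * (lam * W (L c1) + (1 - lam) * W (L c2))"
    using c by (simp add: mult_left_mono)
  also have "\<dots> = (c2 - c) * W (L c1) + (c - c1) * W (L c2)"
  proof -
    have h1: "(c2 - c1) * lam = c2 - c" using c by (simp add: lam_def)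
    have h2: "(c2 - c1) * (1 - lam) = c - c1" using h1 by (simp add: algebra_simps)
    have "(c2 - c1) * (lam * W (L c1) + (1 - lam) * W (L c2))
       = ((c2 - c1) * lam) * W (L c1) + ((c2 - c1) * (1 - lam)) * W (L c2)"
      by (simp add: algebra_simps)
    then show ?thesis by (simp only: h1 h2)
  qed
  finally show ?thesis by (simp add: W_def X_def L_def d_def)
qed

lemma real_core:
  fixes \<sigma> :: "real \<Rightarrow> real"
  assumes bnd: "\<And>t. 0 \<le> t \<Longrightarrow> t \<le> 1 \<Longrightarrow> 0 \<le> \<sigma> t \<and> \<sigma> t \<le> t"
    and s1: "\<sigma> 1 < 1"
    and key: "\<And>k r c1 c c2. k = 1 \<or> k = -1 \<Longrightarrow> 0 \<le> c1 \<Longrightarrow> c1 < c \<Longrightarrow> c < c2 \<Longrightarrow> c2 \<le> 1 \<Longrightarrow>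
      (c2 - c1) * (if k * (\<sigma> c - r) > 0 then k * (c - r) else 0)
      \<le> (c2 - c) * (if k * (\<sigma> c1 - r) > 0 then k * (c1 - r) else 0)
       + (c - c1) * (if k * (\<sigma> c2 - r) > 0 then k * (c2 - r) else 0)"
  shows "\<exists>s. 0 \<le> s \<and> s \<le> \<sigma> 1 \<and> (\<forall>t. s < t \<and> t < 1 \<longrightarrow> \<sigma> t = s)"
proof -
  have K1: "(c2 - c1) * (if \<sigma> c > r then c - r else 0)
      \<le> (c2 - c) * (if \<sigma> c1 > r then c1 - r else 0) + (c - c1) * (if \<sigma> c2 > r then c2 - r else 0)"
    if "0 \<le> c1" "c1 < c" "c < c2" "c2 \<le> 1" for r c1 c c2
    using key[of 1 c1 c c2 r] that by (simp split del: if_split cong: if_cong)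
  have K2: "(c2 - c1) * (if \<sigma> c < r then r - c else 0)
      \<le> (c2 - c) * (if \<sigma> c1 < r then r - c1 else 0) + (c - c1) * (if \<sigma> c2 < r then r - c2 else 0)"
    if "0 \<le> c1" "c1 < c" "c < c2" "c2 \<le> 1" for r c1 c c2
    using key[of "-1" c1 c c2 r] that by (simp split del: if_split cong: if_cong)
  define a where "a = \<sigma> 1"
  have a0: "0 \<le> a" using bnd[of 1] by (simp add: a_def)
  define q where "q = (a + 1) / 2"
  have q: "a < q" "q < 1" using s1 by (auto simp: q_def a_def)
  define s where "s = \<sigma> q"
  note sd = s_def[symmetric]
  have s0: "0 \<le> s" "s \<le> q" using bnd[of q] q a0 by (auto simp: s_def)
  have sa: "s \<le> a"
  proof (rule ccontr)
    assume "\<not> s \<le> a"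
    have "\<sigma> a \<le> a" using bnd[of a] a0 q by auto
    then have "(1 - a) * (q - a) \<le> 0"
      using K1[of a q 1 a] a0 q \<open>\<not> s \<le> a\<close> by (simp add: sd a_def)
    moreover have "(1 - a) * (q - a) > 0" using q by (intro mult_pos_pos) auto
    ultimately show False by linarith
  qed
  have sq: "s < q" using sa q by simp
  have "\<sigma> t = s" if t: "s < t" "t < 1" for t
  proof -
    consider "q < t" | "t = q" | "t < q" by linarith
    then show ?thesis
    proof cases
      case 1
      have le: "\<sigma> t \<le> s"
      proof (rule ccontr)
        assume "\<not> \<sigma> t \<le> s"
        have "(1 - q) * (t - s) \<le> (t - q) * (if \<sigma> 1 > s then 1 - s else 0)"
          using K1[of q t 1 s] 1 t q s0 \<open>\<not> \<sigma> t \<le> s\<close> by (simp add: sd)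
        also have "\<dots> \<le> (t - q) * (1 - s)" using 1 t by (intro mult_left_mono) auto
        finally have "(1 - q) * (t - s) \<le> (t - q) * (1 - s)" .
        moreover have "(1 - q) * (t - s) - (t - q) * (1 - s) = (q - s) * (1 - t)"
          by (simp add: algebra_simps)
        moreover have "(q - s) * (1 - t) > 0" using sq t by simp
        ultimately show False by linarith
      qed
      have ge: "s \<le> \<sigma> t"
      proof (rule ccontr)
        assume "\<not> s \<le> \<sigma> t"
        have "(t - s) * (if \<sigma> q < s then s - q else 0)
          \<le> (t - q) * (if \<sigma> s < s then s - s else 0)
           + (q - s) * (if \<sigma> t < s then s - t else 0)"
          using K2[of s q t s] 1 t q s0 sq by simp
        then have "0 \<le> (q - s) * (s - t)" using \<open>\<not> s \<le> \<sigma> t\<close> by (simp add: sd cong: if_cong)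
        moreover have "(q - s) * (s - t) < 0" using sq t by (simp add: mult_pos_neg)
        ultimately show False by linarith
      qed
      show ?thesis using le ge by simp
    next
      case 2 then show ?thesis by (simp add: sd)
    next
      case 3
      have le: "\<sigma> t \<le> s"
      proof (rule ccontr)
        assume "\<not> \<sigma> t \<le> s"
        have "\<sigma> s \<le> s" using bnd[of s] s0 q by auto
        then have "(q - s) * (t - s) \<le> 0"
          using K1[of s t q s] 3 t s0 q \<open>\<not> \<sigma> t \<le> s\<close> by (simp add: sd)
        moreover have "(q - s) * (t - s) > 0" using 3 t by (intro mult_pos_pos) auto
        ultimately show False by linarith
      qed
      have ge: "s \<le> \<sigma> t"
      proof (rule ccontr)
        assume "\<not> s \<le> \<sigma> t"
        define r where "r = \<sigma> t"
        have rt: "r < t" "0 \<le> t" using \<open>\<not> s \<le> \<sigma> t\<close> t s0 by (auto simp: r_def)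
        have "(1 - t) * (q - r) \<le> (q - t) * (if \<sigma> 1 > r then 1 - r else 0)"
          using K1[of t q 1 r] 3 t q rt \<open>\<not> s \<le> \<sigma> t\<close> by (simp add: sd r_def)
        also have "\<dots> \<le> (q - t) * (1 - r)" using 3 rt q by (intro mult_left_mono) auto
        finally have "(1 - t) * (q - r) \<le> (q - t) * (1 - r)" .
        moreover have "(1 - t) * (q - r) - (q - t) * (1 - r) = (t - r) * (1 - q)"
          by (simp add: algebra_simps)
        moreover have "(t - r) * (1 - q) > 0" using rt q by simp
        ultimately show False by linarith
      qed
      show ?thesis using le ge by simp
    qed
  qed
  then show ?thesis using s0 sa by (auto simp: a_def)
qed


lemma dp_two:
  fixes g :: "'n::finite \<Rightarrow> real"
  shows "decision_problem {0, 1 :: real^'n} (\<lambda>a i. if a = 1 then g i else 0) (\<lambda>y. if bexp y g > 0 then 1 else 0)"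
proof -
  have z: "bexp y (\<lambda>i. 0) = 0" for y :: "real^'n" by (simp add: bexp_def)
  have n: "(0::real^'n) \<noteq> 1" by (metis vec_eq_iff zero_index one_index zero_neq_one)
  show ?thesis unfolding decision_problem_def
    using n by (auto simp: z finite_imp_compact continuous_on_finite)
qed

lemma W_two:
  fixes g :: "'n::finite \<Rightarrow> real"
  shows "bexp x ((\<lambda>a i. if a = (1::real^'n) then g i else 0) (if bexp y g > 0 then 1 else 0))
     = (if bexp y g > 0 then bexp x g else 0)"
proof -
  have z: "bexp x (\<lambda>i. 0) = 0" by (simp add: bexp_def)
  have n: "(0::real^'n) \<noteq> 1" by (metis vec_eq_iff zero_index one_index zero_neq_one)
  show ?thesis using n z by auto
qed

lemma bexp_add: "bexp (x + y) f = bexp x f + bexp y f"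
  by (simp add: bexp_def sum.distrib distrib_right)

lemma bexp_scale: "bexp (t *\<^sub>R x) f = t * bexp x f"
  by (simp add: bexp_def sum_distrib_left mult.assoc)

lemma bexp_affine:
  fixes y :: "real^'n"
  assumes "(\<Sum>i\<in>UNIV. y $ i) = 1"
  shows "bexp y (\<lambda>i. k * (f i - M - r)) = k * (bexp y f - M - r)"
proof -
  have "bexp y (\<lambda>i. k * (f i - M - r)) = (\<Sum>i\<in>UNIV. k * (y $ i * f i) - (k * (M + r)) * y $ i)"
    unfolding bexp_def by (rule sum.cong) (auto simp: algebra_simps)
  also have "\<dots> = k * bexp y f - k * (M + r) * (\<Sum>i\<in>UNIV. y $ i)"
    by (simp add: sum_subtractf sum_distrib_left bexp_def)
  finally show ?thesis using assms by (simp add: algebra_simps)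
qed



theorem corollary4:
  fixes mu :: "real^'n" and \<phi> :: "real^'n \<Rightarrow> real^'n" and x1 :: "real^'n"
  assumes "CARD('n) \<ge> 2"
    and "mu \<in> rel_interior belief_simplex"
    and "\<forall>x\<in>belief_simplex. \<phi> x \<in> belief_simplex"
    and "respects_blackwell mu \<phi>"
    and "x1 \<in> belief_simplex"
    and "contractive_error mu \<phi> x1"
    and "\<forall>x\<in>belief_simplex. \<not> expansive_error mu \<phi> x"
  shows "\<exists>x1s\<in>closed_segment mu (\<phi> x1). \<forall>x'\<in>open_segment x1s x1. \<phi> x' = x1s"
proof -
  note ri = assms(2) and rb = assms(4) and x1S = assms(5)
  have muS: "mu \<in> belief_simplex" using ri rel_interior_subset by blast
  have ce: "\<phi> x1 \<in> closed_segment x1 mu" "\<phi> x1 \<noteq> x1"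
    using assms(6) by (auto simp: contractive_error_def)
  have noexp: "\<phi> x \<in> closed_segment x mu" if "x \<in> belief_simplex" for x
    using assms(7) that by (auto simp: expansive_error_def)
  have neq: "x1 \<noteq> mu" using ce by auto
  define d where "d = x1 - mu"
  have d0: "d \<noteq> 0" using neq by (simp add: d_def)
  define L where "L t = mu + t *\<^sub>R d" for t
  have L1: "L 1 = x1" by (simp add: L_def d_def)
  define dd where "dd i = d $ i / (d \<bullet> d)" for i
  define M where "M = bexp mu dd"
  have dpos: "d \<bullet> d > 0" using d0 by simp
  have bd: "bexp d dd = 1"
  proof -
    have "bexp d dd = (\<Sum>i\<in>UNIV. d $ i * d $ i) / (d \<bullet> d)"
      by (simp add: bexp_def dd_def sum_divide_distrib)
    also have "\<dots> = 1"
    proof -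
      have ee: "(\<Sum>i\<in>UNIV. d $ i * d $ i) = d \<bullet> d" by (simp only: inner_vec_def inner_real_def)
      show ?thesis unfolding ee using dpos by simp
    qed
    finally show ?thesis .
  qed
  have bL: "bexp (L t) dd = M + t" for t
    by (simp add: L_def bexp_add bexp_scale bd M_def)
  have sum_mu: "(\<Sum>i\<in>UNIV. mu $ i) = 1" using muS by (simp add: belief_simplex_def)
  have sum_x1: "(\<Sum>i\<in>UNIV. x1 $ i) = 1" using x1S by (simp add: belief_simplex_def)
  have sum_L: "(\<Sum>i\<in>UNIV. L t $ i) = 1" for t
  proof -
    have "(\<Sum>i\<in>UNIV. L t $ i) = (\<Sum>i\<in>UNIV. mu $ i + t * (x1 $ i - mu $ i))"
      by (simp add: L_def d_def)
    also have "\<dots> = (\<Sum>i\<in>UNIV. mu $ i) + t * (\<Sum>i\<in>UNIV. x1 $ i - mu $ i)"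
      by (simp only: sum.distrib sum_distrib_left)
    also have "\<dots> = (\<Sum>i\<in>UNIV. mu $ i) + t * ((\<Sum>i\<in>UNIV. x1 $ i) - (\<Sum>i\<in>UNIV. mu $ i))"
      by (simp only: sum_subtractf)
    finally show ?thesis using sum_mu sum_x1 by simp
  qed
  have LS: "L t \<in> belief_simplex" if "0 \<le> t" "t \<le> 1" for t
  proof -
    have "0 \<le> L t $ i" for i
    proof -
      have "L t $ i = (1 - t) * mu $ i + t * x1 $ i" by (simp add: L_def d_def algebra_simps)
      moreover have "0 \<le> mu $ i" "0 \<le> x1 $ i" using muS x1S by (auto simp: belief_simplex_def)
      ultimately show ?thesis using that by simp
    qed
    then show ?thesis unfolding belief_simplex_def using sum_L[of t] by blast
  qed
  define \<sigma> where "\<sigma> t = bexp (\<phi> (L t)) dd - M" for t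
  have phiL: "\<phi> (L t) = L (\<sigma> t) \<and> 0 \<le> \<sigma> t \<and> \<sigma> t \<le> t" if t01: "0 \<le> t" "t \<le> 1" for t
  proof -
    have "\<phi> (L t) \<in> closed_segment (L t) mu" by (rule noexp[OF LS[OF t01]])
    then obtain v where v: "0 \<le> v" "v \<le> 1" "\<phi> (L t) = (1 - v) *\<^sub>R L t + v *\<^sub>R mu"
      unfolding in_segment(1) by blast
    have "(1 - v) *\<^sub>R L t + v *\<^sub>R mu = (1 - v) *\<^sub>R (mu + t *\<^sub>R d) + v *\<^sub>R (mu + 0 *\<^sub>R d)"
      by (simp add: L_def)
    also have "\<dots> = L ((1 - v) * t)"
      using line_comb[of "1 - v" v mu t d 0] by (simp add: L_def)
    finally have e1: "\<phi> (L t) = L ((1 - v) * t)" using v by simp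
    then have "\<sigma> t = (1 - v) * t" by (simp add: \<sigma>_def bL)
    moreover have "(1 - v) * t \<le> 1 * t" using v t01 by (intro mult_right_mono) auto
    moreover have "0 \<le> (1 - v) * t" using v t01 by simp
    ultimately show ?thesis using e1 by simp
  qed
  have s1: "\<sigma> 1 < 1"
  proof -
    have "\<sigma> 1 \<le> 1" using phiL[of 1] by simp
    moreover have "\<sigma> 1 \<noteq> 1" using phiL[of 1] ce(2) L1 by auto
    ultimately show ?thesis by simp
  qed
  obtain e0 where e0: "e0 > 0" "ball mu e0 \<inter> affine hull belief_simplex \<subseteq> belief_simplex"
    using ri by (auto simp: mem_rel_interior_ball)
  define e where "e = e0 / (2 * norm d)"
  have e: "e > 0" using e0 d0 by (simp add: e_def)
  have Sin: "mu + t *\<^sub>R (x1 - mu) \<in> belief_simplex" if "-e \<le> t" "t \<le> 1" for t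
  proof (cases "0 \<le> t")
    case True then show ?thesis using LS[OF True that(2)] by (simp add: L_def d_def)
  next
    case False
    have "mu + t *\<^sub>R (x1 - mu) = (1 - t) *\<^sub>R mu + t *\<^sub>R x1" by (simp add: algebra_simps)
    also have "\<dots> \<in> affine hull belief_simplex"
      by (rule mem_affine) (auto intro: hull_inc muS x1S)
    finally have aff: "mu + t *\<^sub>R (x1 - mu) \<in> affine hull belief_simplex" .
    have "dist mu (mu + t *\<^sub>R (x1 - mu)) = \<bar>t\<bar> * norm d" by (simp add: dist_norm d_def)
    also have "\<dots> \<le> e * norm d" using False that by (intro mult_right_mono) auto
    also have "\<dots> < e0" using e0 d0 by (simp add: e_def)
    finally have "mu + t *\<^sub>R (x1 - mu) \<in> ball mu e0" by simp
    then show ?thesis using aff e0 by blast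
  qed
  have key: "(c2 - c1) * (if k * (\<sigma> c - r) > 0 then k * (c - r) else 0)
      \<le> (c2 - c) * (if k * (\<sigma> c1 - r) > 0 then k * (c1 - r) else 0)
       + (c - c1) * (if k * (\<sigma> c2 - r) > 0 then k * (c2 - r) else 0)"
    if "k = 1 \<or> k = -1" "0 \<le> c1" "c1 < c" "c < c2" "c2 \<le> 1" for k r c1 c c2
  proof -
    define g where "g = (\<lambda>i. k * (dd i - M - r))"
    have gL: "bexp (L t) g = k * (t - r)" for t
      using bexp_affine[OF sum_L[of t], where k=k and f=dd and M=M and r=r] by (simp add: g_def bL)
    have gphi: "bexp (\<phi> (L t)) g = k * (\<sigma> t - r)" if "0 \<le> t" "t \<le> 1" for t
    proof -
      have "\<phi> (L t) = L (\<sigma> t)" using phiL[OF that] by blast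
      then show ?thesis using gL[of "\<sigma> t"] by simp
    qed
    have W: "bexp (L t) ((\<lambda>a i. if a = (1::real^'n) then g i else 0) ((\<lambda>y. if bexp y g > 0 then 1 else 0) (\<phi> (L t))))
       = (if k * (\<sigma> t - r) > 0 then k * (t - r) else 0)" if "0 \<le> t" "t \<le> 1" for t
      using W_two[where x="L t" and g=g and y="\<phi> (L t)"] gL[of t] gphi[OF that] by simp
    have "(c2 - c1) * bexp (mu + c *\<^sub>R (x1 - mu)) ((\<lambda>a i. if a = (1::real^'n) then g i else 0) ((\<lambda>y. if bexp y g > 0 then 1 else 0) (\<phi> (mu + c *\<^sub>R (x1 - mu)))))
    \<le> (c2 - c) * bexp (mu + c1 *\<^sub>R (x1 - mu)) ((\<lambda>a i. if a = (1::real^'n) then g i else 0) ((\<lambda>y. if bexp y g > 0 then 1 else 0) (\<phi> (mu + c1 *\<^sub>R (x1 - mu)))))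
     + (c - c1) * bexp (mu + c2 *\<^sub>R (x1 - mu)) ((\<lambda>a i. if a = (1::real^'n) then g i else 0) ((\<lambda>y. if bexp y g > 0 then 1 else 0) (\<phi> (mu + c2 *\<^sub>R (x1 - mu)))))"
      by (rule blackwell_line[OF rb dp_two Sin e neq that(2-5)])
    moreover have "0 \<le> c" "c \<le> 1" "c1 \<le> 1" "0 \<le> c2" using that by auto
    ultimately show ?thesis
      unfolding d_def[symmetric] L_def[symmetric] using that
      by (simp only: W[of c] W[of c1] W[of c2])
  qed
  obtain s where s: "0 \<le> s" "s \<le> \<sigma> 1" "\<And>t. s < t \<Longrightarrow> t < 1 \<Longrightarrow> \<sigma> t = s"
    using real_core[of \<sigma>, OF _ s1 key] phiL by blast
  show ?thesis
  proof (rule bexI[of _ "L s"])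
    have phx1: "\<phi> x1 = L (\<sigma> 1)" using phiL[of 1] L1 by simp
    show "L s \<in> closed_segment mu (\<phi> x1)"
    proof (cases "\<sigma> 1 = 0")
      case True
      then have "s = 0" using s by simp
      then show ?thesis by (simp add: L_def)
    next
      case False
      then have pos: "\<sigma> 1 > 0" using s by simp
      define w where "w = s / \<sigma> 1"
      have w: "0 \<le> w" "w \<le> 1" using s pos by (auto simp: w_def)
      have "(1 - w) *\<^sub>R mu + w *\<^sub>R \<phi> x1 = (1 - w) *\<^sub>R (mu + 0 *\<^sub>R d) + w *\<^sub>R (mu + \<sigma> 1 *\<^sub>R d)"
        by (simp add: phx1 L_def)
      also have "\<dots> = L ((1 - w) * 0 + w * \<sigma> 1)" unfolding L_def by (rule line_comb) simp
      also have "\<dots> = L s" using pos by (simp add: w_def)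
      finally show ?thesis unfolding in_segment using w by metis
    qed
    show "\<forall>x'\<in>open_segment (L s) x1. \<phi> x' = L s"
    proof
      fix x' assume "x' \<in> open_segment (L s) x1"
      then obtain w where w: "0 < w" "w < 1" "x' = (1 - w) *\<^sub>R L s + w *\<^sub>R L 1"
        by (auto simp: in_segment L1)
      have "x' = L ((1 - w) * s + w * 1)" using w line_comb[of "1 - w" w mu s d 1] unfolding L_def by simp
      moreover have "s < (1 - w) * s + w * 1" "(1 - w) * s + w * 1 < 1" "0 \<le> (1 - w) * s + w * 1"
      proof -
        have s1': "s < 1" using s s1 by simp
        have "w * (1 - s) > 0" using w s1' by simp
        moreover have "(1 - w) * (1 - s) > 0" using w s1' by simp
        moreover have "(1 - w) * s \<ge> 0" using w s by simp
        ultimately show "s < (1 - w) * s + w * 1" "(1 - w) * s + w * 1 < 1" "0 \<le> (1 - w) * s + w * 1"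
          using w by (auto simp: algebra_simps)
      qed
      ultimately show "\<phi> x' = L s" using phiL s(3) by auto
    qed
  qed
qed

end
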